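(* Let $M$ be a mould such that $M^0=0$, $M^1=0$, $M$ is alternal, and there exists a constant mould $C$ such that $\mathrm{swap}(M)+C$ is alternil. Then $M$ satisfies Ecalle's senary relation $$\mathrm{teru}(M)^r=\bigl(\mathrm{push}\circ\mathrm{mantar}\circ\mathrm{teru}\circ\mathrm{mantar}\bigr)(M)^r$$ for $r=1,2$ and $3$.
   Context: Moulds. A mould is a sequence $M=(M^m)_{m\geqslant 0}$ with $M^0\in\mathbb Q$ and $M^m=M^m(x_1,\dots,x_m)\in\mathbb Q[x_1,\dots,x_m]$; $M^m(u_1,\dots,u_m)$ denotes substitution $x_i\mapsto u_i$; $M$ is extended linearly to formal linear combinations of words by $(u_1,\dots,u_m)\mapsto M^m(u_1,\dots,u_m)$. A mould $C$ is constant if every $C^m$ is a rational number. For $m\geqslant1$: $\mathrm{teru}(M)^1=M^1$, and for $m\geqslant2$, $\mathrm{teru}(M)^m(u_1,\dots,u_m)=M^m(u_1,\dots,u_m)+\frac{1}{u_m}\{M^{m-1}(u_1,\dots,u_{m-2},u_{m-1}+u_m)-M^{m-1}(u_1,\dots,u_{m-2},u_{m-1})\}$; $\mathrm{mantar}(M)^m(u_1,\dots,u_m)=(-1)^{m-1}M^m(u_m,\dots,u_1)$; $\mathrm{push}(M)^m(u_1,\dots,u_m)=M^m(-u_1-\cdots-u_m,u_1,\dots,u_{m-1})$; $\mathrm{swap}(M)^m(v_1,\dots,v_m)=M^m(v_m,v_{m-1}-v_m,\dots,v_1-v_2)$ (in depth $0$: $\mathrm{teru},\mathrm{push},\mathrm{swap}$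 preserve $M^0$ and $\mathrm{mantar}(M)^0=-M^0$). $(M+C)^m=M^m+C^m$. Alternal: $M^0=0$ and for all $p,q\geqslant1$, $\sum_{w}M^{p+q}(w)=0$, the sum over all shuffles $w$ (counted with multiplicity) of the words $(x_1,\dots,x_p)$ and $(x_{p+1},\dots,x_{p+q})$. Alternil: define a bilinear product $\star$ on formal linear combinations of words in the letters $x_1,x_2,\dots$ with coefficients in $\mathbb Q(x_1,x_2,\dots)$ by $\emptyset\star\omega=\omega\star\emptyset=\omega$ and, for letters $u\neq v$ and words $\omega,\eta$, $u\omega\star v\eta=u(\omega\star v\eta)+v(u\omega\star\eta)+\frac{1}{u-v}\bigl(u(\omega\star\eta)-v(\omega\star\eta)\bigr)$. A mould $N$ is alternil if $N^0=0$ and for all $p,q\geqslant1$, applying $N$ (linearly, coefficients kept) to $(x_1,\dots,x_p)\star(x_{p+1},\dots,x_{p+q})$ gives $0$. *)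

theory Defs
  imports Complex_Main
begin

text \<open>A mould M is represented by its components: M m is a function
  on rational points of length m (only its values on lists of length m matter).
  Polynomial identities over Q are identities of polynomial functions on Q^m
  (Q is infinite).\<close>

type_synonym mould = "nat \<Rightarrow> rat list \<Rightarrow> rat"

inductive polyfun :: "nat \<Rightarrow> (rat list \<Rightarrow> rat) \<Rightarrow> bool" for n :: nat where
  pf_const: "polyfun n (\<lambda>_. c)"
| pf_var: "i < n \<Longrightarrow> polyfun n (\<lambda>u. u ! i)"
| pf_add: "polyfun n f \<Longrightarrow> polyfun n g \<Longrightarrow> polyfun n (\<lambda>u. f u + g u)"
| pf_mult: "polyfun n f \<Longrightarrow> polyfun n g \<Longrightarrow> polyfun n (\<lambda>u. f u * g u)"

definition is_mould :: "mould \<Rightarrow> bool" where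
  "is_mould M \<longleftrightarrow> (\<forall>m. \<exists>g. polyfun m g \<and> (\<forall>u. length u = m \<longrightarrow> M m u = g u))"

definition teru :: "mould \<Rightarrow> mould" where
  "teru M m u = (if m \<le> 1 then M m u
     else M m u + (1 / u ! (m - 1)) *
       (M (m - 1) (take (m - 2) u @ [u ! (m - 2) + u ! (m - 1)]) - M (m - 1) (take (m - 1) u)))"

definition mantar :: "mould \<Rightarrow> mould" where
  "mantar M m u = (if m = 0 then - M 0 u else (-1) ^ (m - 1) * M m (rev u))"

definition push :: "mould \<Rightarrow> mould" where
  "push M m u = (if m = 0 then M 0 u else M m ((- sum_list u) # take (m - 1) u))"

definition swap :: "mould \<Rightarrow> mould" where
  "swap M m v = (if m = 0 then M 0 v
     else M m (map (\<lambda>i. if i = 0 then v ! (m - 1) else v ! (m - 1 - i) - v ! (m - i)) [0..<m]))"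

fun shuffle_list :: "'a list \<Rightarrow> 'a list \<Rightarrow> 'a list list" where
  "shuffle_list [] w = [w]"
| "shuffle_list w [] = [w]"
| "shuffle_list (a # as) (b # bs) =
     map ((#) a) (shuffle_list as (b # bs)) @ map ((#) b) (shuffle_list (a # as) bs)"

definition alternal :: "mould \<Rightarrow> bool" where
  "alternal M \<longleftrightarrow> (\<forall>u. M 0 u = 0) \<and>
     (\<forall>a b. a \<noteq> [] \<longrightarrow> b \<noteq> [] \<longrightarrow>
        sum_list (map (M (length a + length b)) (shuffle_list a b)) = 0)"

text \<open>The alternil product on words of letter indices (letter i stands for the
  variable x_i), with coefficients evaluated at the point x (assignment of values
  to the variables).  Result: a formal linear combination as a list of
  (coefficient, word) pairs.\<close>
fun star :: "(nat \<Rightarrow> rat) \<Rightarrow> nat list \<Rightarrow> nat list \<Rightarrow> (rat \<times> nat list) list" where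
  "star x [] w = [(1, w)]"
| "star x w [] = [(1, w)]"
| "star x (u # \<omega>) (v # \<eta>) =
     map (\<lambda>(c, w). (c, u # w)) (star x \<omega> (v # \<eta>))
   @ map (\<lambda>(c, w). (c, v # w)) (star x (u # \<omega>) \<eta>)
   @ map (\<lambda>(c, w). (c / (x u - x v), u # w)) (star x \<omega> \<eta>)
   @ map (\<lambda>(c, w). (- c / (x u - x v), v # w)) (star x \<omega> \<eta>)"

text \<open>Alternil: the identity of rational functions in x_1..x_{p+q} is expressed
  by evaluation at all points with pairwise distinct coordinates (where all
  denominators are nonzero).  Letters are indexed from 0.\<close>
definition alternil :: "mould \<Rightarrow> bool" where
  "alternil N \<longleftrightarrow> (\<forall>u. N 0 u = 0) \<and>
     (\<forall>p q (x :: nat \<Rightarrow> rat). p \<ge> 1 \<longrightarrow> q \<ge> 1 \<longrightarrow> inj_on x {0..<p + q} \<longrightarrow>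
        sum_list (map (\<lambda>(c, w). c * N (length w) (map x w))
                      (star x [0..<p] [p..<p + q])) = 0)"

end

theory Submission
  imports Defs "HOL-Computational_Algebra.Polynomial"
begin

lemma inj3: "distinct [x0,x1,x2::rat] \<Longrightarrow> inj_on (nth [x0,x1,x2]) {0..<3}"
  unfolding inj_on_def by (auto simp: less_Suc_eq nth_Cons split: nat.splits)
lemma inj2: "x0 \<noteq> (x1::rat) \<Longrightarrow> inj_on (nth [x0,x1]) {0..<2}"
  unfolding inj_on_def by (auto simp: less_Suc_eq nth_Cons split: nat.splits)

lemma alternil_inst: "alternil N \<Longrightarrow> 1 \<le> p \<Longrightarrow> 1 \<le> q \<Longrightarrow> inj_on x {0..<p + q} \<Longrightarrow>
  sum_list (map (\<lambda>(c, w). c * N (length w) (map x w)) (star x [0..<p] [p..<p + q])) = 0"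
  unfolding alternil_def by auto

lemma alt3_gen:
  assumes "alternil N" "distinct [x0,x1,x2::rat]"
  shows "N 3 [x0,x1,x2] + N 3 [x1,x0,x2] + N 3 [x1,x2,x0] + (N 2 [x1,x0] - N 2 [x1,x2])/(x0-x2)
     + (N 2 [x0,x2] - N 2 [x1,x2])/(x0-x1) = 0"
proof -
  have "inj_on (nth [x0,x1,x2]) {0..<1+2}" using inj3[OF assms(2)] by (simp add: numeral_eq_Suc)
  from alternil_inst[OF assms(1) _ _ this] have "sum_list (map (\<lambda>(c, w). c * N (length w) (map (nth [x0,x1,x2]) w))
                      (star (nth [x0,x1,x2]) [0..<1] [1..<1 + 2])) = 0"
    by simp
  then show ?thesis by (simp add: upt_rec numeral_eq_Suc diff_divide_distrib)
qed

lemma alt2_gen: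
  assumes "alternil N" "x0 \<noteq> (x1::rat)"
  shows "N 2 [x0,x1] + N 2 [x1,x0] + (N 1 [x0] - N 1 [x1])/(x0-x1) = 0"
proof -
  have "inj_on (nth [x0,x1]) {0..<1+1}" using inj2[OF assms(2)] by (simp add: numeral_eq_Suc)
  from alternil_inst[OF assms(1) _ _ this] have "sum_list (map (\<lambda>(c, w). c * N (length w) (map (nth [x0,x1]) w))
                      (star (nth [x0,x1]) [0..<1] [1..<1 + 1])) = 0"
    by simp
  then show ?thesis by (simp add: upt_rec numeral_eq_Suc diff_divide_distrib)
qed

lemma swap3: "swap M 3 [v1,v2,v3] = M 3 [v3, v2-v3, v1-v2]"
  by (simp add: swap_def upt_rec numeral_eq_Suc)
lemma swap2: "swap M 2 [v1,v2] = M 2 [v2, v1-v2]"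
  by (simp add: swap_def upt_rec numeral_eq_Suc)
lemma swap1: "swap M (Suc 0) [v1] = M (Suc 0) [v1]"
  by (simp add: swap_def)

lemma altM3:
  assumes "alternil (\<lambda>m u. swap M m u + C m)" "b \<noteq> 0" "c \<noteq> 0" "b + c \<noteq> 0"
    and "d = b + c" "e = - c" "s = a + b + c" "f = - (b + c)"
  shows "M 3 [a,b,c] + M 3 [a,d,e] + M 3 [s,f,b] + 3 * C 3 + (M 2 [s,e] - M 2 [a,b])/d
     + (M 2 [a,d] - M 2 [a,b])/c = 0"
proof -
  have "distinct [s, a+b, a]" using assms by auto
  from alt3_gen[OF assms(1) this] show ?thesis
    unfolding assms(5-8) using assms(2-4) by (simp add: swap3 swap2 algebra_simps diff_divide_distrib)
qed

lemma altM2: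
  assumes "alternil (\<lambda>m u. swap M m u + C m)" "b \<noteq> 0" "z = a + b" "w = - b" "\<forall>u. M 1 u = 0"
  shows "M 2 [a,b] + M 2 [z,w] + 2 * C 2 = 0"
proof -
  have "a + b \<noteq> a" using assms by auto
  from alt2_gen[OF assms(1) this] show ?thesis
    unfolding assms(3,4) using assms(2,5) by (simp add: swap2 swap1 algebra_simps diff_divide_distrib)
qed

lemma alternal_inst: "alternal M \<Longrightarrow> a \<noteq> [] \<Longrightarrow> b \<noteq> [] \<Longrightarrow>
   sum_list (map (M (length a + length b)) (shuffle_list a b)) = 0"
  unfolding alternal_def by blast
lemma alternal2: "alternal M \<Longrightarrow> M 2 [a,b] + M 2 [b,a] = 0"
  using alternal_inst[of M "[a]" "[b]"] by (simp add: numeral_eq_Suc)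
lemma alternal3a: "alternal M \<Longrightarrow> M 3 [a,b,c] + M 3 [b,a,c] + M 3 [b,c,a] = 0"
  using alternal_inst[of M "[a]" "[b,c]"] by (simp add: add.assoc numeral_eq_Suc)
lemma alternal3b: "alternal M \<Longrightarrow> M 3 [a,b,c] + M 3 [a,c,b] + M 3 [c,a,b] = 0"
  using alternal_inst[of M "[a,b]" "[c]"] by (simp add: add.assoc numeral_eq_Suc)

lemma neg_div: "x = -y \<Longrightarrow> x/(-z) = y/(z::rat)" by simp

lemma gen3:
  assumes al: "alternal M" and an: "alternil (\<lambda>m u. swap M m u + C m)"
    and nz: "a \<noteq> 0" "b \<noteq> 0" "c \<noteq> 0" "s \<noteq> 0" "b + c \<noteq> 0" and sd: "s = a + b + c"
  shows "M 3 [a,b,c] + 1/c * (M 2 [a, b+c] - M 2 [a,b]) = M 3 [-s, a, b] + 1/s * (M 2 [-(b+c), b] - M 2 [a,b])"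
proof -
  have X3: "M 3 [a,b,c] + M 3 [a,b+c,-c] + M 3 [s,-(b+c),b] + 3 * C 3 + (M 2 [s,-c] - M 2 [a,b])/(b+c)
     + (M 2 [a,b+c] - M 2 [a,b])/c = 0"
    by (rule altM3[OF an]) (use nz sd in auto)
  have X4: "M 3 [b,a,-s] + M 3 [b,-(b+c),s] + M 3 [-c,b+c,a] + 3 * C 3 + (M 2 [-c,s] - M 2 [b,a])/(-(b+c))
     + (M 2 [b,-(b+c)] - M 2 [b,a])/(-s) = 0"
    by (rule altM3[OF an]) (use nz sd in \<open>auto simp: algebra_simps\<close>)
  have a1: "M 3 [-s,a,b] + M 3 [-s,b,a] + M 3 [b,-s,a] = 0" by (rule alternal3b[OF al])
  have a2: "M 3 [-s,b,a] + M 3 [b,-s,a] + M 3 [b,a,-s] = 0" by (rule alternal3a[OF al])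
  have a3: "M 3 [a,b+c,-c] + M 3 [a,-c,b+c] + M 3 [-c,a,b+c] = 0" by (rule alternal3b[OF al])
  have a4: "M 3 [a,-c,b+c] + M 3 [-c,a,b+c] + M 3 [-c,b+c,a] = 0" by (rule alternal3a[OF al])
  have a5: "M 3 [s,-(b+c),b] + M 3 [s,b,-(b+c)] + M 3 [b,s,-(b+c)] = 0" by (rule alternal3b[OF al])
  have a6: "M 3 [s,b,-(b+c)] + M 3 [b,s,-(b+c)] + M 3 [b,-(b+c),s] = 0" by (rule alternal3a[OF al])
  have s1: "M 2 [-c,s] = - M 2 [s,-c]" using alternal2[OF al, of "-c" s] by linarith
  have s2: "M 2 [b,a] = - M 2 [a,b]" using alternal2[OF al, of b a] by linarith
  have s3: "M 2 [b,-(b+c)] = - M 2 [-(b+c),b]" using alternal2[OF al, of b "-(b+c)"] by linarith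
  have d1: "(M 2 [-c,s] - M 2 [b,a])/(-(b+c)) = (M 2 [s,-c] - M 2 [a,b])/(b+c)"
  proof -
    have "M 2 [-c,s] - M 2 [b,a] = - (M 2 [s,-c] - M 2 [a,b])" using s1 s2 by linarith
    then show ?thesis by (rule neg_div)
  qed
  have d2: "(M 2 [b,-(b+c)] - M 2 [b,a])/(-s) = (M 2 [-(b+c),b] - M 2 [a,b])/s"
  proof -
    have "M 2 [b,-(b+c)] - M 2 [b,a] = - (M 2 [-(b+c),b] - M 2 [a,b])" using s3 s2 by linarith
    then show ?thesis by (rule neg_div)
  qed
  have g: "1/c * (M 2 [a, b+c] - M 2 [a,b]) = (M 2 [a, b+c] - M 2 [a,b]) / c"
     "1/s * (M 2 [-(b+c), b] - M 2 [a,b]) = (M 2 [-(b+c), b] - M 2 [a,b])/s" by simp_all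
  show ?thesis unfolding g using X3 X4 a1 a2 a3 a4 a5 a6 d1 d2 by linarith
qed

lemma rel2:
  assumes al: "alternal M" and an: "alternil (\<lambda>m u. swap M m u + C m)" and m1: "\<forall>u. M 1 u = 0"
    and "y \<noteq> 0" "z = x + y"
  shows "M 2 [x,y] - M 2 [-y,z] = -2 * C 2"
proof -
  have "M 2 [x,y] + M 2 [z,-y] + 2 * C 2 = 0" by (rule altM2[OF an]) (use assms in auto)
  moreover have "M 2 [z,-y] = - M 2 [-y,z]" using alternal2[OF al, of z "-y"] by linarith
  ultimately show ?thesis by linarith
qed

lemma gen2:
  assumes al: "alternal M" and an: "alternil (\<lambda>m u. swap M m u + C m)" and m1: "\<forall>u. M 1 u = 0"
    and "b \<noteq> 0" "a + b \<noteq> 0"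
  shows "M 2 [a,b] = M 2 [-(a+b), a]"
proof -
  note r = rel2[OF al an m1]
  have "M 2 [1,1] - M 2 [-1,2] = -2 * C 2" using r[of 1 2 1] by simp
  moreover have "M 2 [-1,2] - M 2 [-2,1] = -2 * C 2" using r[of 2 1 "-1"] by simp
  moreover have "M 2 [-2,1] - M 2 [-1,-1] = -2 * C 2" using r[of 1 "-1" "-2"] by simp
  moreover have "M 2 [-1,-1] - M 2 [1,-2] = -2 * C 2" using r[of "-1" "-2" "-1"] by simp
  moreover have "M 2 [1,-2] - M 2 [2,-1] = -2 * C 2" using r[of "-2" "-1" 1] by simp
  moreover have "M 2 [2,-1] - M 2 [1,1] = -2 * C 2" using r[of "-1" 1 2] by simp
  ultimately have c0: "C 2 = 0" by linarith
  have "M 2 [a,b] - M 2 [-b,a+b] = -2 * C 2" using r[of b "a+b" a] assms by simp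
  moreover have "M 2 [-b,a+b] - M 2 [-(a+b),a] = -2 * C 2" using r[of "a+b" a "-b"] assms by simp
  ultimately show ?thesis using c0 by linarith
qed

definition ispoly :: "(rat \<Rightarrow> rat) \<Rightarrow> bool" where
  "ispoly f \<longleftrightarrow> (\<exists>p. \<forall>t. f t = poly p t)"

lemma ispoly_const[intro]: "ispoly (\<lambda>t. c)"
  unfolding ispoly_def by (rule exI[of _ "[:c:]"]) simp
lemma ispoly_id[intro]: "ispoly (\<lambda>t. t)"
  unfolding ispoly_def by (rule exI[of _ "[:0,1:]"]) simp
lemma ispoly_add[intro]: assumes "ispoly f" "ispoly g" shows "ispoly (\<lambda>t. f t + g t)"
proof -
  obtain p q where "\<And>t. f t = poly p t" "\<And>t. g t = poly q t" using assms unfolding ispoly_def by blast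
  then show ?thesis unfolding ispoly_def by (intro exI[of _ "p + q"]) simp
qed
lemma ispoly_diff[intro]: assumes "ispoly f" "ispoly g" shows "ispoly (\<lambda>t. f t - g t)"
proof -
  obtain p q where "\<And>t. f t = poly p t" "\<And>t. g t = poly q t" using assms unfolding ispoly_def by blast
  then show ?thesis unfolding ispoly_def by (intro exI[of _ "p - q"]) simp
qed
lemma ispoly_mult[intro]: assumes "ispoly f" "ispoly g" shows "ispoly (\<lambda>t. f t * g t)"
proof -
  obtain p q where "\<And>t. f t = poly p t" "\<And>t. g t = poly q t" using assms unfolding ispoly_def by blast
  then show ?thesis unfolding ispoly_def by (intro exI[of _ "p * q"]) simp
qed
lemma ispoly_uminus[intro]: assumes "ispoly f" shows "ispoly (\<lambda>t. - f t)"
proof -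
  obtain p where "\<And>t. f t = poly p t" using assms unfolding ispoly_def by blast
  then show ?thesis unfolding ispoly_def by (intro exI[of _ "- p"]) simp
qed

lemma polyfun_line:
  assumes "polyfun n g"
  shows "length xs = n \<Longrightarrow> length ys = n \<Longrightarrow> ispoly (\<lambda>t. g (map2 (\<lambda>x y. x + t * y) xs ys))"
  using assms
proof induction
  case (pf_const c) then show ?case by auto
next
  case (pf_var i)
  then have "\<And>t. map2 (\<lambda>x y. x + t * y) xs ys ! i = xs ! i + t * ys ! i" by simp
  then show ?case by (simp add: ispoly_add ispoly_mult ispoly_const ispoly_id)
next
  case (pf_add f g) then show ?case by auto
next
  case (pf_mult f g) then show ?case by auto
qed

lemma mould_line:
  assumes "is_mould M" "length xs = m" "length ys = m"
    "\<And>t. f t = M m (map2 (\<lambda>x y. x + t * y) xs ys)"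
  shows "ispoly f"
proof -
  obtain g where g: "polyfun m g" "\<And>u. length u = m \<Longrightarrow> M m u = g u"
    using assms(1) unfolding is_mould_def by blast
  have "f = (\<lambda>t. g (map2 (\<lambda>x y. x + t * y) xs ys))"
    using assms(2-4) g(2) by (auto simp: fun_eq_iff)
  with polyfun_line[OF g(1) assms(2,3)] show ?thesis by simp
qed

lemma ispoly_zero:
  assumes "ispoly f" "finite B" "\<And>t. t \<notin> B \<Longrightarrow> f t = 0"
  shows "f x = 0"
proof -
  obtain p where p: "\<And>t. f t = poly p t" using assms(1) unfolding ispoly_def by blast
  show ?thesis
  proof (cases "p = 0")
    case True then show ?thesis using p by simp
  next
    case False
    then have "finite {t. poly p t = 0}" by (rule poly_roots_finite)
    moreover have "UNIV \<subseteq> B \<union> {t. poly p t = 0}" using assms(3) p by auto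
    ultimately have "finite (UNIV :: rat set)" using assms(2) by (meson finite_UnI finite_subset)
    then show ?thesis using infinite_UNIV_char_0 by blast
  qed
qed

definition P3 :: "mould \<Rightarrow> rat \<Rightarrow> rat \<Rightarrow> rat \<Rightarrow> rat" where
  "P3 M a b c = c*(a+b+c)*M 3 [a,b,c] + (a+b+c)*(M 2 [a,b+c] - M 2 [a,b])
     - c*(a+b+c)*M 3 [-(a+b+c),a,b] - c*(M 2 [-(b+c),b] - M 2 [a,b])"

lemma P3_iff:
  assumes "c \<noteq> 0" "s \<noteq> 0" "s = a + b + c"
  shows "P3 M a b c = 0 \<longleftrightarrow>
    M 3 [a,b,c] + 1/c * (M 2 [a, b+c] - M 2 [a,b]) = M 3 [-s, a, b] + 1/s * (M 2 [-(b+c), b] - M 2 [a,b])"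
  using assms unfolding P3_def by (auto simp: field_simps)

lemma P3_poly:
  assumes "is_mould M"
  shows "ispoly (\<lambda>t. P3 M (a+t) (b+t) (c+t))"
proof -
  have h1: "ispoly (\<lambda>t. M 3 [a+t, b+t, c+t])"
    by (rule mould_line[OF assms, of "[a,b,c]" _ "[1,1,1]"]) auto
  have e2: "\<And>t. b+t+(c+t) = (b+c) + t * 2" by (simp add: algebra_simps)
  have h2: "ispoly (\<lambda>t. M 2 [a+t, b+t+(c+t)])" unfolding e2
    by (rule mould_line[OF assms, of "[a,b+c]" _ "[1,2]"]) auto
  have h3: "ispoly (\<lambda>t. M 2 [a+t, b+t])"
    by (rule mould_line[OF assms, of "[a,b]" _ "[1,1]"]) auto
  have e4: "\<And>t. -(a+t+(b+t)+(c+t)) = -(a+b+c) + t * (-3)" by (simp add: algebra_simps)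
  have h4: "ispoly (\<lambda>t. M 3 [-(a+t+(b+t)+(c+t)), a+t, b+t])" unfolding e4
    by (rule mould_line[OF assms, of "[-(a+b+c),a,b]" _ "[-3,1,1]"]) auto
  have e5: "\<And>t. -(b+t+(c+t)) = -(b+c) + t * (-2)" by (simp add: algebra_simps)
  have h5: "ispoly (\<lambda>t. M 2 [-(b+t+(c+t)), b+t])" unfolding e5
    by (rule mould_line[OF assms, of "[-(b+c),b]" _ "[-2,1]"]) auto
  show ?thesis unfolding P3_def
    by (intro ispoly_add ispoly_diff ispoly_mult ispoly_const ispoly_id h1 h2 h3 h4 h5)
qed

lemma neg_div2: "(p - q)/(-s) = (q - p)/(s::rat)"
  by (metis minus_diff_eq divide_minus_right minus_divide_left)

lemma full3:
  assumes mo: "is_mould M" and al: "alternal M" and an: "alternil (\<lambda>m u. swap M m u + C m)"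
    and nz: "c \<noteq> 0" "s \<noteq> 0" and sd: "s = a + b + c"
  shows "M 3 [a,b,c] + 1/c * (M 2 [a, b+c] - M 2 [a,b]) = M 3 [-s, a, b] + 1/s * (M 2 [-(b+c), b] - M 2 [a,b])"
proof -
  let ?B = "{-a, -b, -c, -(a+b+c)/3, -(b+c)/2}"
  have "P3 M (a+0) (b+0) (c+0) = 0"
  proof (rule ispoly_zero[OF P3_poly[OF mo], of ?B])
    fix t assume t: "t \<notin> ?B"
    have n1: "a + t \<noteq> 0" "b + t \<noteq> 0" "c + t \<noteq> 0" using t by (auto simp: add_eq_0_iff2)
    have n2: "a + t + (b + t) + (c + t) \<noteq> 0"
    proof
      assume "a + t + (b + t) + (c + t) = 0"
      then have "t = -(a+b+c)/3" by (simp add: field_simps)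
      with t show False by blast
    qed
    have n3: "b + t + (c + t) \<noteq> 0"
    proof
      assume "b + t + (c + t) = 0"
      then have "t = -(b+c)/2" by (simp add: field_simps)
      with t show False by blast
    qed
    show "P3 M (a + t) (b + t) (c + t) = 0"
      using P3_iff[where M=M and a="a+t" and b="b+t" and c="c+t" and s="a+t+(b+t)+(c+t)"]
        gen3[OF al an n1 n2 n3] n1 n2 by simp
  qed simp
  then show ?thesis using P3_iff[OF nz sd] by simp
qed

lemma teru3: "teru M 3 [a,b,c] = M 3 [a,b,c] + 1/c * (M 2 [a, b+c] - M 2 [a,b])"
  by (simp add: teru_def numeral_eq_Suc)
lemma rhs3: "push (mantar (teru (mantar M))) 3 [a,b,c] = M 3 [-(a+b+c), a, b] + 1/(a+b+c) * (M 2 [-(b+c), b] - M 2 [a,b])"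
proof -
  have h: "-b-c-a = -(a+b+c)" "-a-b-c = -(a+b+c)" by simp_all
  show ?thesis
    apply (simp add: push_def mantar_def teru_def numeral_eq_Suc)
    apply (simp only: h neg_div2)
    done
qed

lemma rhs2: "\<forall>u. M 1 u = 0 \<Longrightarrow> push (mantar (teru (mantar M))) 2 [a,b] = M 2 [-(a+b), a]"
  by (simp add: push_def mantar_def teru_def numeral_eq_Suc)

theorem proposition4p2:
  fixes M :: mould
  assumes "is_mould M"
    and "\<forall>u. M 0 u = 0"
    and "\<forall>u. M 1 u = 0"
    and "alternal M"
    and "\<exists>C :: nat \<Rightarrow> rat. alternil (\<lambda>m u. swap M m u + C m)"
  shows "\<forall>r \<in> {1, 2, 3}. \<forall>u. length u = r \<and> u ! (r - 1) \<noteq> 0 \<and> sum_list u \<noteq> 0 \<longrightarrow>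
           teru M r u = push (mantar (teru (mantar M))) r u"
proof -
  obtain C where an: "alternil (\<lambda>m u. swap M m u + C m)" using assms(5) by blast
  show ?thesis
  proof (intro ballI allI impI)
    fix r :: nat and u :: "rat list" assume r: "r \<in> {1::nat, 2, 3}" and h: "length u = r \<and> u ! (r - 1) \<noteq> 0 \<and> sum_list u \<noteq> 0"
    consider "r = 1" | "r = 2" | "r = 3" using r by auto
    then show "teru M r u = push (mantar (teru (mantar M))) r u"
    proof cases
      case 1
      then obtain a where u: "u = [a]" using h by (auto simp: length_Suc_conv)
      show ?thesis unfolding u 1 using assms(3) by (simp add: teru_def push_def mantar_def)
    next
      case 2
      then obtain a b where u: "u = [a,b]" using h by (auto simp: length_Suc_conv numeral_eq_Suc)
      have nz: "b \<noteq> 0" "a + b \<noteq> 0" using h u 2 by auto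
      have "teru M 2 [a,b] = M 2 [a,b]" using assms(3) by (simp add: teru_def numeral_eq_Suc)
      also have "\<dots> = M 2 [-(a+b), a]" by (rule gen2[OF assms(4) an assms(3) nz])
      also have "\<dots> = push (mantar (teru (mantar M))) 2 [a,b]" using rhs2[of M, OF assms(3)] by simp
      finally show ?thesis unfolding u 2 .
    next
      case 3
      then obtain a b c where u: "u = [a,b,c]" using h by (auto simp: length_Suc_conv numeral_eq_Suc)
      have nz: "c \<noteq> 0" "a + b + c \<noteq> 0" using h u 3 by (auto simp: add.assoc)
      show ?thesis unfolding u 3 teru3 rhs3
        by (rule full3[OF assms(1,4) an nz refl])
    qed
  qed
qed
end
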